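(* Let $A=\prod_{i=1}^n A_i$ with each $A_i\in\{\mathsf P^1,\mathbb F_2\}$, with the product bicharacter, and let $\mathcal G,\mathcal M\subseteq A$ be subgroups with $\mathcal G\subseteq\mathcal M^\perp$. Set $\mathcal L=\mathcal G^\perp$ (so $\mathcal M\subseteq\mathcal L$). Let $R\subseteq[n]$ be a correctable region. Then every coset $[l]\in\mathcal L/\mathcal M$ has a representative $l\in\mathcal L$ with $\operatorname{supp}(l)\cap R=\emptyset$.
   Context: Bicharacter: on $\mathsf P^1=\{I,X,Y,Z\}$ (single-qubit Paulis modulo phase) $\langle a,b\rangle=+1$ if they commute, $-1$ otherwise; on $\mathbb F_2$, $\langle x,y\rangle=(-1)^{xy}$; on $A$ the coordinatewise product. $B^\perp=\{a\in A:\langle a,b\rangle=1\ \forall b\in B\}$. $\operatorname{supp}(a)=\{i:a_i\neq I\}$. A region $R\subseteq[n]$ is correctable if every $e\in\mathcal M^\perp$ with $\operatorname{supp}(e)\subseteq R$ belongs to $\mathcal G$. *)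

theory Defs
  imports Main
begin

(* Single-qubit Paulis modulo phase *)
datatype pauli = PI | PX | PY | PZ

(* multiplication modulo phase: P^1 is isomorphic to F_2^2 *)
fun pmult :: "pauli \<Rightarrow> pauli \<Rightarrow> pauli" where
  "pmult PI q = q"
| "pmult p PI = p"
| "pmult PX PX = PI" | "pmult PX PY = PZ" | "pmult PX PZ = PY"
| "pmult PY PX = PZ" | "pmult PY PY = PI" | "pmult PY PZ = PX"
| "pmult PZ PX = PY" | "pmult PZ PY = PX" | "pmult PZ PZ = PI"

definition pcommute :: "pauli \<Rightarrow> pauli \<Rightarrow> bool" where
  "pcommute p q \<longleftrightarrow> p = PI \<or> q = PI \<or> p = q"

(* Kind of a site: A_i = P^1 (Qubit) or A_i = F_2 (Bit) *)
datatype kind = Qubit | Bit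

datatype site = Q pauli | F bool

fun site_add :: "site \<Rightarrow> site \<Rightarrow> site" where
  "site_add (Q p) (Q q) = Q (pmult p q)"
| "site_add (F x) (F y) = F (x \<noteq> y)"
| "site_add _ _ = undefined"

fun site_char :: "site \<Rightarrow> site \<Rightarrow> int" where
  "site_char (Q p) (Q q) = (if pcommute p q then 1 else -1)"
| "site_char (F x) (F y) = (if x \<and> y then -1 else 1)"
| "site_char _ _ = 1"

definition site_zero :: "kind \<Rightarrow> site" where
  "site_zero k = (case k of Qubit \<Rightarrow> Q PI | Bit \<Rightarrow> F False)"

definition carrierA :: "nat \<Rightarrow> (nat \<Rightarrow> kind) \<Rightarrow> (nat \<Rightarrow> site) set" where
  "carrierA n K = {a. (\<forall>i<n. case K i of Qubit \<Rightarrow> a i \<in> range Q | Bit \<Rightarrow> a i \<in> range F)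
                     \<and> (\<forall>i\<ge>n. a i = Q PI)}"

definition zeroA :: "nat \<Rightarrow> (nat \<Rightarrow> kind) \<Rightarrow> nat \<Rightarrow> site" where
  "zeroA n K = (\<lambda>i. if i < n then site_zero (K i) else Q PI)"

definition addA :: "nat \<Rightarrow> (nat \<Rightarrow> site) \<Rightarrow> (nat \<Rightarrow> site) \<Rightarrow> nat \<Rightarrow> site" where
  "addA n a b = (\<lambda>i. if i < n then site_add (a i) (b i) else Q PI)"

definition charA :: "nat \<Rightarrow> (nat \<Rightarrow> site) \<Rightarrow> (nat \<Rightarrow> site) \<Rightarrow> int" where
  "charA n a b = (\<Prod>i<n. site_char (a i) (b i))"

(* subgroups of A (every element is its own inverse, so closure under + and 0 suffices) *)
definition subgroupA :: "nat \<Rightarrow> (nat \<Rightarrow> kind) \<Rightarrow> (nat \<Rightarrow> site) set \<Rightarrow> bool" where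
  "subgroupA n K G \<longleftrightarrow> G \<subseteq> carrierA n K \<and> zeroA n K \<in> G
      \<and> (\<forall>a\<in>G. \<forall>b\<in>G. addA n a b \<in> G)"

definition perpA :: "nat \<Rightarrow> (nat \<Rightarrow> kind) \<Rightarrow> (nat \<Rightarrow> site) set \<Rightarrow> (nat \<Rightarrow> site) set" where
  "perpA n K B = {a \<in> carrierA n K. \<forall>b\<in>B. charA n a b = 1}"

definition suppA :: "nat \<Rightarrow> (nat \<Rightarrow> site) \<Rightarrow> nat set" where
  "suppA n a = {i. i < n \<and> a i \<noteq> Q PI \<and> a i \<noteq> F False}"

definition correctable ::
  "nat \<Rightarrow> (nat \<Rightarrow> kind) \<Rightarrow> (nat \<Rightarrow> site) set \<Rightarrow> (nat \<Rightarrow> site) set \<Rightarrow> nat set \<Rightarrow> bool" where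
  "correctable n K G M R \<longleftrightarrow> (\<forall>e \<in> perpA n K M. suppA n e \<subseteq> R \<longrightarrow> e \<in> G)"

end

theory Submission
  imports Defs
begin


locale bichar =
  fixes U :: "'a set" and add :: "'a \<Rightarrow> 'a \<Rightarrow> 'a" and z :: 'a and chi :: "'a \<Rightarrow> 'a \<Rightarrow> int"
  assumes fin: "finite U" and zU: "z \<in> U" and addU: "a\<in>U \<Longrightarrow> b\<in>U \<Longrightarrow> add a b \<in> U"
  and inv: "a\<in>U \<Longrightarrow> b\<in>U \<Longrightarrow> add a (add a b) = b"
  and mult: "a\<in>U \<Longrightarrow> b\<in>U \<Longrightarrow> e\<in>U \<Longrightarrow> chi (add a b) e = chi a e * chi b e"
  and sym: "a\<in>U \<Longrightarrow> b\<in>U \<Longrightarrow> chi a b = chi b a"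
  and pm: "a\<in>U \<Longrightarrow> b\<in>U \<Longrightarrow> chi a b = 1 \<or> chi a b = -1"
  and z1: "e\<in>U \<Longrightarrow> chi z e = 1"
  and nondeg: "a\<in>U \<Longrightarrow> a \<noteq> z \<Longrightarrow> \<exists>e\<in>U. chi a e = -1"
begin

definition perp where "perp S = {e\<in>U. \<forall>s\<in>S. chi s e = 1}"

definition sg where "sg S \<longleftrightarrow> S \<subseteq> U \<and> z \<in> S \<and> (\<forall>a\<in>S. \<forall>b\<in>S. add a b \<in> S)"

lemma bij_add: assumes "sg S" "s0 \<in> S" shows "bij_betw (add s0) S S"
  by (rule bij_betw_byWitness[where f'="add s0"]) (use assms in \<open>auto simp: sg_def inv subset_iff\<close>)

lemma sum_zero:
  assumes "sg S" "s0\<in>S" "e\<in>U" "chi s0 e = -1"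
  shows "(\<Sum>s\<in>S. chi s e) = 0"
proof -
  have SU: "S \<subseteq> U" using assms(1) sg_def by auto
  have "(\<Sum>s\<in>S. chi s e) = (\<Sum>s\<in>S. chi (add s0 s) e)"
    using sum.reindex_bij_betw[OF bij_add[OF assms(1,2)], of "\<lambda>s. chi s e"] by simp
  also have "\<dots> = (\<Sum>s\<in>S. chi s0 e * chi s e)"
    by (rule sum.cong) (use SU assms in \<open>auto simp: mult subset_iff\<close>)
  also have "\<dots> = - (\<Sum>s\<in>S. chi s e)" using assms(4) by (simp add: sum_negf)
  finally show ?thesis by simp
qed

lemma sum_S:
  assumes "sg S" "e\<in>U"
  shows "(\<Sum>s\<in>S. chi s e) = (if e \<in> perp S then int (card S) else 0)"
proof (cases "e \<in> perp S")
  case True then show ?thesis by (simp add: perp_def)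
next
  case False
  then obtain s0 where "s0 \<in> S" "chi s0 e \<noteq> 1" using assms by (auto simp: perp_def)
  moreover have "s0 \<in> U" using \<open>s0\<in>S\<close> assms sg_def by auto
  ultimately have "chi s0 e = -1" using pm assms by blast
  then show ?thesis using sum_zero[OF assms(1) \<open>s0\<in>S\<close> assms(2)] False by simp
qed

lemma sum_U:
  assumes "s\<in>U"
  shows "(\<Sum>e\<in>U. chi s e) = (if s = z then int (card U) else 0)"
proof (cases "s = z")
  case True then show ?thesis using z1 by simp
next
  case False
  then obtain e0 where e0: "e0 \<in> U" "chi s e0 = -1" using nondeg assms by blast
  have sgU: "sg U" using zU addU by (auto simp: sg_def)
  have "(\<Sum>e\<in>U. chi s e) = (\<Sum>e\<in>U. chi s (add e0 e))"
    using sum.reindex_bij_betw[OF bij_add[OF sgU e0(1)], of "\<lambda>e. chi s e"] by simp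
  also have "\<dots> = (\<Sum>e\<in>U. chi s e0 * chi s e)"
  proof (rule sum.cong)
    fix e assume "e \<in> U"
    then show "chi s (add e0 e) = chi s e0 * chi s e"
      using sym mult addU e0 assms by metis
  qed simp
  also have "\<dots> = - (\<Sum>e\<in>U. chi s e)" using e0 by (simp add: sum_negf)
  finally show ?thesis using False by simp
qed

lemma card_perp:
  assumes "sg S"
  shows "card S * card (perp S) = card U"
proof -
  have SU: "S \<subseteq> U" "z \<in> S" using assms sg_def by auto
  have fS: "finite S" using SU fin finite_subset by blast
  have PU: "perp S \<subseteq> U" by (auto simp: perp_def)
  have "(\<Sum>e\<in>U. \<Sum>s\<in>S. chi s e) = (\<Sum>e\<in>U. if e \<in> perp S then int (card S) else 0)"
    using sum_S[OF assms] by simp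
  also have "\<dots> = (\<Sum>e\<in>perp S. int (card S))"
    using PU fin by (simp add: sum.If_cases Int_absorb1)
  also have "\<dots> = int (card S * card (perp S))" by simp
  finally have 1: "(\<Sum>e\<in>U. \<Sum>s\<in>S. chi s e) = int (card S * card (perp S))" .
  have "(\<Sum>e\<in>U. \<Sum>s\<in>S. chi s e) = (\<Sum>s\<in>S. \<Sum>e\<in>U. chi s e)" by (rule sum.swap)
  also have "\<dots> = (\<Sum>s\<in>S. if s = z then int (card U) else 0)"
    by (rule sum.cong) (use SU sum_U in auto)
  also have "\<dots> = int (card U)" using fS SU by simp
  finally show ?thesis using 1 by (metis of_nat_eq_iff)
qed

lemma sg_perp: assumes "sg S" shows "sg (perp S)"
proof -
  have SU: "S \<subseteq> U" using assms sg_def by auto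
  have "z \<in> perp S" using SU zU z1 sym by (auto simp: perp_def subset_iff)
  moreover have "add a b \<in> perp S" if "a \<in> perp S" "b \<in> perp S" for a b
  proof -
    have "chi s (add a b) = 1" if "s\<in>S" for s
    proof -
      have "s \<in> U" "a \<in> U" "b \<in> U" "chi s a = 1" "chi s b = 1"
        using that \<open>a \<in> perp S\<close> \<open>b \<in> perp S\<close> SU by (auto simp: perp_def)
      then have "chi s (add a b) = chi (add a b) s" using sym addU by simp
      also have "\<dots> = chi a s * chi b s" using mult \<open>s \<in> U\<close> \<open>a \<in> U\<close> \<open>b \<in> U\<close> by simp
      also have "\<dots> = 1" using sym \<open>s \<in> U\<close> \<open>a \<in> U\<close> \<open>b \<in> U\<close> \<open>chi s a = 1\<close> \<open>chi s b = 1\<close> by simp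
      finally show ?thesis .
    qed
    then show ?thesis using that addU by (auto simp: perp_def)
  qed
  ultimately show ?thesis by (auto simp: sg_def perp_def)
qed

lemma double_perp: assumes "sg S" shows "perp (perp S) = S"
proof -
  have SU: "S \<subseteq> U" using assms sg_def by auto
  have sub: "S \<subseteq> perp (perp S)" using SU sym by (auto simp: perp_def subset_iff)
  have c1: "card S * card (perp S) = card U" by (rule card_perp[OF assms])
  have c2: "card (perp S) * card (perp (perp S)) = card U" by (rule card_perp[OF sg_perp[OF assms]])
  have "z \<in> perp S" using sg_perp[OF assms] sg_def by auto
  moreover have "finite (perp S)" using fin by (auto simp: perp_def)
  ultimately have "card (perp S) > 0" using card_gt_0_iff by blast
  then have "card (perp (perp S)) = card S" using c1 c2 by (metis mult.commute mult_left_cancel not_gr0)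
  moreover have "finite (perp (perp S))" using fin by (auto simp: perp_def)
  ultimately show ?thesis using sub by (metis card_subset_eq)
qed

end


definition okk :: "kind \<Rightarrow> site \<Rightarrow> bool" where
  "okk k x = (case k of Qubit \<Rightarrow> x \<in> range Q | Bit \<Rightarrow> x \<in> range F)"

lemma carrier_iff: "a \<in> carrierA n K \<longleftrightarrow> (\<forall>i<n. okk (K i) (a i)) \<and> (\<forall>i\<ge>n. a i = Q PI)"
  by (simp add: carrierA_def okk_def)

lemma okk_cases: assumes "okk k x"
  obtains p where "k = Qubit" "x = Q p" | b where "k = Bit" "x = F b"
  using assms by (cases k) (auto simp: okk_def)

lemma pm_inv: "pmult p (pmult p q) = q" by (cases p; cases q; simp)
lemma pm_inv2: "pmult (pmult p q) q = p" by (cases p; cases q; simp)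
lemma pm_self: "pmult p p = PI" by (cases p; simp)
lemma pm_char: "site_char (Q (pmult p q)) (Q r) = site_char (Q p) (Q r) * site_char (Q q) (Q r)"
  by (cases p; cases q; cases r; simp add: pcommute_def)

lemma pc_mult: "pcommute (pmult p q) r \<longleftrightarrow> (pcommute p r = pcommute q r)"
  by (cases p; cases q; cases r; simp add: pcommute_def)

lemma s_inv: "okk k x \<Longrightarrow> okk k y \<Longrightarrow> site_add x (site_add x y) = y"
  by (elim okk_cases) (auto simp: pm_inv)
lemma s_inv2: "okk k x \<Longrightarrow> okk k y \<Longrightarrow> site_add (site_add x y) y = x"
  by (elim okk_cases) (auto simp: pm_inv2)
lemma s_self: "okk k x \<Longrightarrow> site_add x x = site_zero k"
  by (elim okk_cases) (auto simp: pm_self site_zero_def)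
lemma s_zz: "site_add (site_zero k) (site_zero k) = site_zero k"
  by (cases k) (auto simp: site_zero_def)
lemma s_ok: "okk k x \<Longrightarrow> okk k y \<Longrightarrow> okk k (site_add x y)"
  by (elim okk_cases) (auto simp: okk_def)
lemma s_zok: "okk k (site_zero k)"
  by (cases k) (auto simp: okk_def site_zero_def)
lemma s_mult: "okk k x \<Longrightarrow> okk k y \<Longrightarrow> okk k e \<Longrightarrow>
   site_char (site_add x y) e = site_char x e * site_char y e"
  by (elim okk_cases) (auto simp: pc_mult)
lemma s_sym: "site_char x y = site_char y x"
  by (cases x; cases y) (auto simp: pcommute_def)
lemma s_pm: "site_char x y = 1 \<or> site_char x y = -1"
  by (cases x; cases y) auto
lemma s_z1: "site_char x (site_zero k) = 1"
  by (cases x; cases k) (auto simp: site_zero_def pcommute_def)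
lemma s_z1': "site_char (site_zero k) x = 1"
  using s_z1 s_sym by metis
lemma s_zero1: "x = Q PI \<or> x = F False \<Longrightarrow> site_char x y = 1"
  by (cases y) (auto simp: pcommute_def)

lemma notsupp: "a \<in> carrierA n K \<Longrightarrow> i < n \<Longrightarrow> i \<notin> suppA n a \<longleftrightarrow> a i = site_zero (K i)"
  unfolding carrier_iff suppA_def
  by (auto elim!: okk_cases[of "K i" "a i"] simp: site_zero_def)

lemma zero_carrier: "zeroA n K \<in> carrierA n K"
  by (simp add: carrier_iff zeroA_def s_zok)

lemma add_carrier: "a \<in> carrierA n K \<Longrightarrow> b \<in> carrierA n K \<Longrightarrow> addA n a b \<in> carrierA n K"
  by (simp add: carrier_iff addA_def s_ok)

lemma add_inv: "a \<in> carrierA n K \<Longrightarrow> b \<in> carrierA n K \<Longrightarrow> addA n a (addA n a b) = b"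
  by (rule ext) (auto simp: carrier_iff addA_def s_inv)

lemma add_inv2: "a \<in> carrierA n K \<Longrightarrow> b \<in> carrierA n K \<Longrightarrow> addA n (addA n a b) b = a"
  by (rule ext) (auto simp: carrier_iff addA_def s_inv2)

lemma char_mult: "a \<in> carrierA n K \<Longrightarrow> b \<in> carrierA n K \<Longrightarrow> e \<in> carrierA n K \<Longrightarrow>
   charA n (addA n a b) e = charA n a e * charA n b e"
  unfolding charA_def prod.distrib[symmetric]
  by (rule prod.cong) (auto simp: carrier_iff addA_def s_mult)

lemma char_sym: "charA n a b = charA n b a"
  unfolding charA_def by (simp add: s_sym)

lemma char_pm: "charA n a b = 1 \<or> charA n a b = -1"
proof -
  have e: "\<bar>site_char x y\<bar> = 1" for x y using s_pm[of x y] by auto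
  have "\<bar>\<Prod>i<m. site_char (a i) (b i)\<bar> = 1" for m
    by (induction m) (simp_all add: abs_mult e)
  then have "\<bar>charA n a b\<bar> = 1" unfolding charA_def by simp
  then show ?thesis by linarith
qed

lemma char_z1: "charA n (zeroA n K) e = 1"
  unfolding charA_def zeroA_def by (simp add: s_z1')

lemma finite_carrier: "finite (carrierA n K)"
proof -
  define Sites where "Sites = Q ` {PI,PX,PY,PZ} \<union> F ` {True, False}"
  have fS: "finite Sites" unfolding Sites_def by simp
  have allS: "x \<in> Sites" for x
  proof (cases x)
    case (Q p) then show ?thesis unfolding Sites_def by (cases p) simp_all
  next
    case (F b) then show ?thesis unfolding Sites_def by (cases b) simp_all
  qed
  define h where "h = (\<lambda>xs i. if i < n then xs ! i else Q PI)"
  define L where "L = {xs. set xs \<subseteq> Sites \<and> length xs = n}"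
  have "carrierA n K \<subseteq> h ` L"
  proof
    fix a assume a: "a \<in> carrierA n K"
    have "a = h (map a [0..<n])"
    proof
      fix i show "a i = h (map a [0..<n]) i"
        using a unfolding h_def carrier_iff by (cases "i < n") simp_all
    qed
    moreover have "map a [0..<n] \<in> L"
      unfolding L_def using allS by (simp add: subset_iff)
    ultimately show "a \<in> h ` L" by blast
  qed
  moreover have "finite L" unfolding L_def
    by (rule finite_lists_length_eq[OF fS])
  ultimately show ?thesis using finite_subset by blast
qed

lemma supp_zero: "suppA n (zeroA n K) = {}"
  by (auto simp: suppA_def zeroA_def site_zero_def split: kind.splits)

definition UR :: "nat \<Rightarrow> (nat \<Rightarrow> kind) \<Rightarrow> nat set \<Rightarrow> (nat \<Rightarrow> site) set" where
  "UR n K R = {a \<in> carrierA n K. suppA n a \<subseteq> R}"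

lemma bichar_UR: assumes "R \<subseteq> {..<n}"
  shows "bichar (UR n K R) (addA n) (zeroA n K) (charA n)"
proof
  show "finite (UR n K R)" using finite_carrier by (auto simp: UR_def)
  show "zeroA n K \<in> UR n K R"
    using zero_carrier supp_zero by (auto simp: UR_def)
  show "addA n a b \<in> UR n K R" if "a \<in> UR n K R" "b \<in> UR n K R" for a b
  proof -
    have c: "addA n a b \<in> carrierA n K" using that add_carrier by (auto simp: UR_def)
    have "i \<in> R" if "i \<in> suppA n (addA n a b)" for i
    proof (rule ccontr)
      assume "i \<notin> R"
      have i: "i < n" using that by (auto simp: suppA_def)
      have "a i = site_zero (K i)" "b i = site_zero (K i)"
        using notsupp[of a n K i] notsupp[of b n K i] \<open>a \<in> UR n K R\<close> \<open>b \<in> UR n K R\<close> \<open>i \<notin> R\<close> i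
        by (auto simp: UR_def)
      then have "addA n a b i = site_zero (K i)" using i by (simp add: addA_def s_zz)
      then show False using notsupp[OF c i] that by simp
    qed
    then show ?thesis using c by (auto simp: UR_def)
  qed
  show "addA n a (addA n a b) = b" if "a \<in> UR n K R" "b \<in> UR n K R" for a b
    using that add_inv by (auto simp: UR_def)
  show "charA n (addA n a b) e = charA n a e * charA n b e"
    if "a \<in> UR n K R" "b \<in> UR n K R" "e \<in> UR n K R" for a b e
    using that char_mult by (auto simp: UR_def)
  show "charA n a b = charA n b a" for a b by (rule char_sym)
  show "charA n a b = 1 \<or> charA n a b = -1" for a b by (rule char_pm)
  show "charA n (zeroA n K) e = 1" for e by (rule char_z1)
  show "\<exists>e\<in>UR n K R. charA n a e = -1" if "a \<in> UR n K R" "a \<noteq> zeroA n K" for a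
  proof -
    have ac: "a \<in> carrierA n K" using that by (auto simp: UR_def)
    obtain i where i: "i < n" "a i \<noteq> site_zero (K i)"
    proof (rule ccontr)
      assume "\<not> thesis"
      then have "\<forall>i<n. a i = site_zero (K i)" using that by blast
      then have "a = zeroA n K" using ac by (auto simp: zeroA_def carrier_iff)
      then show False using \<open>a \<noteq> zeroA n K\<close> by simp
    qed
    have iR: "i \<in> R" using notsupp[OF ac i(1)] i that by (auto simp: UR_def)
    have oki: "okk (K i) (a i)" using ac i by (auto simp: carrier_iff)
    obtain w where w: "okk (K i) w" "site_char (a i) w = -1"
    proof (rule okk_cases[OF oki])
      fix p assume h: "K i = Qubit" "a i = Q p"
      then have "p \<noteq> PI" using i by (auto simp: site_zero_def)
      then show thesis
        using that[of "Q (if p = PX then PZ else PX)"] h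
        by (cases p) (auto simp: okk_def pcommute_def)
    next
      fix b assume h: "K i = Bit" "a i = F b"
      then have "b" using i by (auto simp: site_zero_def)
      then show thesis using that[of "F True"] h by (auto simp: okk_def)
    qed
    define e where "e = (\<lambda>j. if j = i then w else zeroA n K j)"
    have ec: "e \<in> carrierA n K"
      using w i zero_carrier by (auto simp: e_def carrier_iff)
    have "suppA n e \<subseteq> {i}"
    proof
      fix j assume "j \<in> suppA n e"
      then have "j < n" by (auto simp: suppA_def)
      show "j \<in> {i}"
      proof (rule ccontr)
        assume "j \<notin> {i}"
        then have "e j = site_zero (K j)" using \<open>j < n\<close> by (simp add: e_def zeroA_def)
        then show False using notsupp[OF ec \<open>j<n\<close>] \<open>j \<in> suppA n e\<close> by simp
      qed
    qed
    then have eU: "e \<in> UR n K R" using ec iR by (auto simp: UR_def)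
    have "charA n a e = (\<Prod>j<n. if j = i then site_char (a i) w else 1)"
      unfolding charA_def by (rule prod.cong) (auto simp: e_def zeroA_def s_z1)
    also have "\<dots> = -1" using i w by simp
    finally show ?thesis using eU by blast
  qed
qed



theorem lemma7:
  fixes n :: nat and K :: "nat \<Rightarrow> kind"
    and G M :: "(nat \<Rightarrow> site) set" and R :: "nat set"
  assumes "subgroupA n K G" and "subgroupA n K M"
    and "G \<subseteq> perpA n K M"
    and "R \<subseteq> {..<n}"
    and "correctable n K G M R"
  shows "\<forall>l \<in> perpA n K G. \<exists>l' \<in> perpA n K G.
           addA n l' l \<in> M \<and> suppA n l' \<inter> R = {}"
proof
  fix l assume lL: "l \<in> perpA n K G"
  have lc: "l \<in> carrierA n K" using lL by (auto simp: perpA_def)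
  interpret Bc: bichar "UR n K R" "addA n" "zeroA n K" "charA n"
    by (rule bichar_UR[OF assms(4)])
  have Mc: "M \<subseteq> carrierA n K" "zeroA n K \<in> M" "\<And>a b. a \<in> M \<Longrightarrow> b \<in> M \<Longrightarrow> addA n a b \<in> M"
    using assms(2) by (auto simp: subgroupA_def)
  have RN: "\<And>i. i \<in> R \<Longrightarrow> i < n" using assms(4) by auto
  define r where "r = (\<lambda>a i. if i \<in> R then a i else zeroA n K i)"
  have rU: "r a \<in> UR n K R" if "a \<in> carrierA n K" for a
  proof -
    have c: "r a \<in> carrierA n K"
      using that RN s_zok by (auto simp: r_def carrier_iff zeroA_def)
    have "i \<in> R" if "i \<in> suppA n (r a)" for i
    proof (rule ccontr)
      assume "i \<notin> R"
      have i: "i < n" using that by (auto simp: suppA_def)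
      have "r a i = site_zero (K i)" using \<open>i \<notin> R\<close> i by (simp add: r_def zeroA_def)
      then show False using notsupp[OF c i] that by simp
    qed
    then show ?thesis using c by (auto simp: UR_def)
  qed
  have radd: "r (addA n a b) = addA n (r a) (r b)" for a b
  proof
    fix i show "r (addA n a b) i = addA n (r a) (r b) i"
      using RN[of i] by (auto simp: r_def addA_def zeroA_def s_zz)
  qed
  have rz: "r (zeroA n K) = zeroA n K" by (auto simp: r_def)
  define S where "S = r ` M"
  have sgS: "Bc.sg S"
    unfolding Bc.sg_def S_def
  proof (intro conjI ballI)
    show "r ` M \<subseteq> UR n K R" using rU Mc by auto
    show "zeroA n K \<in> r ` M" using rz Mc by (metis image_eqI)
    fix a b assume "a \<in> r ` M" "b \<in> r ` M"
    then obtain a' b' where "a' \<in> M" "b' \<in> M" "a = r a'" "b = r b'" by auto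
    then show "addA n a b \<in> r ` M" using radd Mc(3) by (metis image_eqI)
  qed
  have chr: "charA n e x = charA n e (r x)" if "e \<in> UR n K R" for e x
    unfolding charA_def
  proof (rule prod.cong)
    fix i assume "i \<in> {..<n}"
    then have i: "i < n" by simp
    show "site_char (e i) (x i) = site_char (e i) (r x i)"
    proof (cases "i \<in> R")
      case True then show ?thesis by (simp add: r_def)
    next
      case False
      then have "e i = site_zero (K i)" using that notsupp[of e n K i] i by (auto simp: UR_def)
      then show ?thesis by (simp add: s_z1')
    qed
  qed simp
  have "r l \<in> Bc.perp (Bc.perp S)"
  proof -
    have "charA n e (r l) = 1" if e: "e \<in> Bc.perp S" for e
    proof -
      have eU: "e \<in> UR n K R" and eS: "\<forall>s\<in>S. charA n s e = 1" using e by (auto simp: Bc.perp_def)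
      have "e \<in> perpA n K M"
      proof -
        have "charA n e m = 1" if "m \<in> M" for m
        proof -
          have "charA n e m = charA n e (r m)" by (rule chr[OF eU])
          also have "\<dots> = charA n (r m) e" by (rule char_sym)
          also have "\<dots> = 1" using eS that by (auto simp: S_def)
          finally show ?thesis .
        qed
        then show ?thesis using eU by (auto simp: perpA_def UR_def)
      qed
      moreover have "suppA n e \<subseteq> R" using eU by (auto simp: UR_def)
      ultimately have "e \<in> G" using assms(5) by (auto simp: correctable_def)
      then have "charA n l e = 1" using lL by (auto simp: perpA_def)
      then show ?thesis using chr[OF eU, of l] char_sym[of n l e] by simp
    qed
    then show ?thesis using rU[OF lc] by (auto simp: Bc.perp_def)
  qed
  then have "r l \<in> S" using Bc.double_perp[OF sgS] by simp
  then obtain m where m: "m \<in> M" "r l = r m" by (auto simp: S_def)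
  have mc: "m \<in> carrierA n K" using m Mc by auto
  define l' where "l' = addA n m l"
  have "l' \<in> perpA n K G"
  proof -
    have "charA n l' g = 1" if "g \<in> G" for g
    proof -
      have gc: "g \<in> carrierA n K" using that assms(1) by (auto simp: subgroupA_def)
      have "charA n g m = 1" using that assms(3) m(1) by (auto simp: perpA_def)
      moreover have "charA n l g = 1" using lL that by (auto simp: perpA_def)
      ultimately show ?thesis unfolding l'_def
        using char_mult[OF mc lc gc] char_sym[of n g m] by simp
    qed
    then show ?thesis using add_carrier[OF mc lc] by (auto simp: perpA_def l'_def)
  qed
  moreover have "addA n l' l \<in> M" using add_inv2[OF mc lc] m(1) by (simp add: l'_def)
  moreover have "suppA n l' \<inter> R = {}"
  proof -
    have "i \<notin> suppA n l'" if "i \<in> R" for i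
    proof -
      have i: "i < n" using RN that .
      have "l i = m i" using fun_cong[OF m(2), of i] that by (simp add: r_def)
      moreover have "okk (K i) (m i)" using mc i by (auto simp: carrier_iff)
      ultimately have "l' i = site_zero (K i)" using i s_self by (simp add: l'_def addA_def)
      then show ?thesis using notsupp[OF add_carrier[OF mc lc] i] by (simp add: l'_def)
    qed
    then show ?thesis by blast
  qed
  ultimately show "\<exists>l' \<in> perpA n K G. addA n l' l \<in> M \<and> suppA n l' \<inter> R = {}" by blast
qed

end
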